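(* Let $0<b<a$, $c=\sqrt{a^2-b^2}$, and let $h>0$ be defined by $\sinh(h/2)=c/b$ (equivalently $\cosh(h/2)=a/b$, $\tanh(h/2)=c/a$). For $\lambda\in(0,b)$ let the modulus $k\in(0,1)$ be given by $k^2=(a^2-b^2)/(a^2-\lambda^2)$, let $K=K(k)$, $K'=K(\sqrt{1-k^2})$, let $\delta\in(0,2K)$ be given by $\operatorname{sn}(\delta/2,k)=\lambda/b$, and set $\zeta=2K-\delta\in(0,2K)$. Let $\tilde q_0(t)=(a\operatorname{sn}(t,k),\,b\operatorname{cn}(t,k))$ and $\hat q_0(s)=(a\tanh s,\,b\operatorname{sech} s)$. Then \[\lim_{\lambda\to b^-}k=1,\quad \lim_{\lambda\to b^-}K=+\infty,\quad \lim_{\lambda\to b^-}K'=\pi/2,\quad \lim_{\lambda\to b^-}\zeta=h,\] and moreover \[\lim_{\lambda\to b^-}\tilde q_0(t)=\hat q_0(t),\qquad \lim_{\lambda\to b^-}\tilde q_0(t\pm\delta)=-\hat q_0(t\mp h),\] where both limits are uniform on compact subsets of $\mathbb{R}$, but not uniform on $\mathbb{R}$.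
   Context: $K(k)=\int_0^{\pi/2}(1-k^2\sin^2\phi)^{-1/2}\,d\phi$ is the complete elliptic integral of the first kind. The amplitude $\varphi=\operatorname{am}(t,k)$ is defined by $t=\int_0^\varphi(1-k^2\sin^2\phi)^{-1/2}d\phi$, and $\operatorname{sn}(t,k)=\sin\varphi$, $\operatorname{cn}(t,k)=\cos\varphi$ are the Jacobian elliptic sine and cosine. *)

theory Defs
  imports "HOL-Analysis.Analysis"
begin

definition ell_integrand :: "real \<Rightarrow> real \<Rightarrow> real" where
  "ell_integrand k \<phi> = 1 / sqrt (1 - k\<^sup>2 * (sin \<phi>)\<^sup>2)"

definition ellK :: "real \<Rightarrow> real" where
  "ellK k = integral {0..pi/2} (ell_integrand k)"

definition ellF :: "real \<Rightarrow> real \<Rightarrow> real" where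
  "ellF k \<phi> = (if 0 \<le> \<phi> then integral {0..\<phi>} (ell_integrand k)
                 else - integral {\<phi>..0} (ell_integrand k))"

text \<open>Jacobi amplitude: am(t,k) is the phi with F(phi,k) = t (unique for 0 <= k < 1).\<close>
definition jam :: "real \<Rightarrow> real \<Rightarrow> real" where
  "jam t k = (THE \<phi>. ellF k \<phi> = t)"

definition jsn :: "real \<Rightarrow> real \<Rightarrow> real" where
  "jsn t k = sin (jam t k)"

definition jcn :: "real \<Rightarrow> real \<Rightarrow> real" where
  "jcn t k = cos (jam t k)"

end

theory Submission
  imports Defs
begin


lemma sin_sq_le: "k\<^sup>2 * (sin x)\<^sup>2 \<le> (k::real)\<^sup>2"
proof -
  have "(sin x)\<^sup>2 \<le> 1" using sin_squared_eq[of x] by (smt (verit) zero_le_power2)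
  then show ?thesis by (simp add: mult_left_le)
qed

lemma ell_den_pos: "0 \<le> (k::real) \<Longrightarrow> k < 1 \<Longrightarrow> 1 - k\<^sup>2 * (sin x)\<^sup>2 > 0"
proof -
  assume "0 \<le> k" "k < 1"
  then have "k\<^sup>2 < 1" using power_strict_mono[of k 1 2] by simp
  moreover have "k\<^sup>2 * (sin x)\<^sup>2 \<le> k\<^sup>2"
    by (rule sin_sq_le)
  ultimately show ?thesis by linarith
qed

lemma ell_ge1: "0 \<le> k \<Longrightarrow> k < 1 \<Longrightarrow> ell_integrand k x \<ge> 1"
proof -
  assume a: "0 \<le> k" "k < 1"
  have p: "1 - k\<^sup>2 * (sin x)\<^sup>2 > 0" using ell_den_pos[OF a] .
  have "1 - k\<^sup>2 * (sin x)\<^sup>2 \<le> 1" by simp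
  then have "sqrt (1 - k\<^sup>2 * (sin x)\<^sup>2) \<le> 1" by simp
  with p show ?thesis unfolding ell_integrand_def by (simp add: divide_simps)
qed

lemma ell_le: "0 \<le> k \<Longrightarrow> k < 1 \<Longrightarrow> ell_integrand k x \<le> 1 / sqrt (1 - k\<^sup>2)"
proof -
  assume a: "0 \<le> k" "k < 1"
  have p: "1 - k\<^sup>2 * (sin x)\<^sup>2 > 0" using ell_den_pos[OF a] .
  have "k\<^sup>2 * (sin x)\<^sup>2 \<le> k\<^sup>2"
    by (rule sin_sq_le)
  then have "1 - k\<^sup>2 \<le> 1 - k\<^sup>2 * (sin x)\<^sup>2" by simp
  moreover have "1 - k\<^sup>2 > 0" using a power_strict_mono[of k 1 2] by simp
  ultimately show ?thesis unfolding ell_integrand_def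
    by (simp add: frac_le)
qed

lemma ell_cont: "0 \<le> k \<Longrightarrow> k < 1 \<Longrightarrow> continuous_on S (ell_integrand k)"
  unfolding ell_integrand_def
  by (intro continuous_intros) (metis ell_den_pos less_irrefl real_sqrt_gt_zero)

lemma ellF_deriv:
  assumes "0 \<le> k" "k < 1"
  shows "(ellF k has_real_derivative ell_integrand k x) (at x)"
proof -
  define R where "R = \<bar>x\<bar> + 1"
  define f where "f = ell_integrand k"
  have cf: "\<And>S. continuous_on S f" unfolding f_def using ell_cont[OF assms] .
  have int: "\<And>u v. f integrable_on {u..v}" by (rule integrable_continuous_real[OF cf])
  define G where "G u = integral {-R..u} f - integral {-R..0} f" for u
  have eq: "ellF k u = G u" if "u \<in> {-R<..<R}" for u
  proof (cases "0 \<le> u")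
    case True
    have "integral {-R..0} f + integral {0..u} f = integral {-R..u} f"
      by (rule Henstock_Kurzweil_Integration.integral_combine) (use True that R_def int in auto)
    then show ?thesis using True unfolding G_def ellF_def f_def by simp
  next
    case False
    have "integral {-R..u} f + integral {u..0} f = integral {-R..0} f"
      by (rule Henstock_Kurzweil_Integration.integral_combine) (use False that R_def int in auto)
    then show ?thesis using False unfolding G_def ellF_def f_def by simp
  qed
  have xin: "x \<in> {-R<..<R}" unfolding R_def by auto
  have "((\<lambda>u. integral {-R..u} f) has_real_derivative f x) (at x within {-R..R})"
    by (rule integral_has_real_derivative) (use cf xin in auto)
  then have "((\<lambda>u. integral {-R..u} f) has_real_derivative f x) (at x)"
    using at_within_Icc_at[of "-R" x R] xin by simp
  then have "(G has_real_derivative f x) (at x)"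
    unfolding G_def by (auto intro!: derivative_eq_intros)
  then show ?thesis unfolding f_def
    by (rule has_field_derivative_transform_within_open[of G _ _ "{-R<..<R}"])
       (use xin eq in auto)
qed



lemma ellF_chain:
  assumes "0 \<le> k" "k < 1" "(g has_real_derivative g') (at x)"
  shows "((\<lambda>x. ellF k (g x)) has_real_derivative ell_integrand k (g x) * g') (at x)"
  using DERIV_chain2[OF ellF_deriv[OF assms(1,2)] assms(3)] .

lemma ellF_0: "ellF k 0 = 0" unfolding ellF_def by simp

lemma ellF_K: "ellF k (pi/2) = ellK k" unfolding ellF_def ellK_def by simp

lemma ellF_diff:
  assumes "0 \<le> k" "k < 1" "x \<le> y"
  shows "y - x \<le> ellF k y - ellF k x \<and> ellF k y - ellF k x \<le> (y - x) / sqrt (1 - k\<^sup>2)"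
proof (cases "x = y")
  case False
  then have "x < y" using assms by simp
  from MVT2[OF this ellF_deriv[OF assms(1,2)]] obtain z where
    z: "ellF k y - ellF k x = (y - x) * ell_integrand k z" by blast
  have "y - x \<le> (y - x) * ell_integrand k z"
    using ell_ge1[OF assms(1,2), of z] \<open>x < y\<close> by (simp add: mult_le_cancel_left1)
  moreover have "(y - x) * ell_integrand k z \<le> (y - x) * (1 / sqrt (1 - k\<^sup>2))"
    using ell_le[OF assms(1,2), of z] \<open>x < y\<close> by (intro mult_left_mono) auto
  ultimately show ?thesis using z by simp
qed simp

lemma ellF_cont: "0 \<le> k \<Longrightarrow> k < 1 \<Longrightarrow> isCont (ellF k) x"
  using DERIV_isCont ellF_deriv by blast

lemma ellF_less: "0 \<le> k \<Longrightarrow> k < 1 \<Longrightarrow> x < y \<Longrightarrow> ellF k x < ellF k y"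
  using ellF_diff[of k x y] by simp

lemma ellF_le_iff: assumes "0 \<le> k" "k < 1" shows "ellF k x \<le> ellF k y \<longleftrightarrow> x \<le> y"
proof
  assume h: "ellF k x \<le> ellF k y"
  show "x \<le> y"
  proof (rule ccontr)
    assume "\<not> x \<le> y"
    then have "y < x" by simp
    with ellF_less[of k y x] h \<open>0 \<le> k\<close> \<open>k < 1\<close> show False by simp
  qed
next
  assume "x \<le> y"
  then show "ellF k x \<le> ellF k y" using ellF_diff[of k x y] \<open>0 \<le> k\<close> \<open>k < 1\<close> by simp
qed

lemma ellF_less_iff: assumes "0 \<le> k" "k < 1" shows "ellF k x < ellF k y \<longleftrightarrow> x < y"
  using ellF_le_iff[OF assms, of y x] by auto

lemma ellF_surj:
  assumes "0 \<le> k" "k < 1"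
  shows "\<exists>\<phi>. ellF k \<phi> = t"
proof -
  have a: "ellF k (-\<bar>t\<bar>) \<le> t"
    using ellF_diff[OF assms, of "-\<bar>t\<bar>" 0] ellF_0[of k] by auto
  have b: "t \<le> ellF k \<bar>t\<bar>"
    using ellF_diff[OF assms, of 0 "\<bar>t\<bar>"] ellF_0[of k] by auto
  from IVT[of "ellF k", OF a b] ellF_cont[OF assms] show ?thesis by auto
qed

lemma jam_eq: assumes "0 \<le> k" "k < 1" shows "ellF k (jam t k) = t"
  unfolding jam_def
proof (rule theI')
  show "\<exists>!\<phi>. ellF k \<phi> = t"
  proof -
    obtain p where p: "ellF k p = t" using ellF_surj[OF assms] by blast
    have "q = p" if "ellF k q = t" for q
      using ellF_le_iff[OF assms, of p q] ellF_le_iff[OF assms, of q p] p that by simp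
    then show ?thesis using p by blast
  qed
qed

lemma jam_unique: "0 \<le> k \<Longrightarrow> k < 1 \<Longrightarrow> ellF k \<phi> = t \<Longrightarrow> jam t k = \<phi>"
proof -
  assume a: "0 \<le> k" "k < 1" "ellF k \<phi> = t"
  have "ellF k (jam t k) = t" by (rule jam_eq[OF a(1,2)])
  then show ?thesis using ellF_le_iff[OF a(1,2), of \<phi> "jam t k"] ellF_le_iff[OF a(1,2), of "jam t k" \<phi>] a(3) by simp
qed

lemma jam_lip:
  assumes "0 \<le> k" "k < 1"
  shows "\<bar>jam t k - x\<bar> \<le> \<bar>t - ellF k x\<bar>"
proof -
  have e: "ellF k (jam t k) = t" by (rule jam_eq[OF assms])
  show ?thesis
  proof (cases "x \<le> jam t k")
    case True
    then show ?thesis using ellF_diff[OF assms True] e by simp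
  next
    case False
    then show ?thesis using ellF_diff[OF assms, of "jam t k" x] e by simp
  qed
qed



lemma ell_integrand_shift: "ell_integrand k (x + pi) = ell_integrand k x"
  unfolding ell_integrand_def by simp

lemma ell_integrand_refl: "ell_integrand k (pi - x) = ell_integrand k x"
  unfolding ell_integrand_def by simp

lemma ellF_sym:
  assumes "0 \<le> k" "k < 1"
  shows "ellF k (pi - x) + ellF k x = 2 * ellK k"
proof -
  define P where "P x = ellF k (pi - x) + ellF k x" for x
  have "\<forall>x. DERIV P x :> 0"
  proof
    fix x
    have "DERIV P x :> ell_integrand k (pi - x) * (-1) + ell_integrand k x"
      unfolding P_def
      by (intro DERIV_add ellF_chain[OF assms] ellF_deriv[OF assms]) (auto intro!: derivative_eq_intros)
    then show "DERIV P x :> 0" using ell_integrand_refl[of k x] by simp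
  qed
  then have "P x = P (pi/2)" by (rule DERIV_isconst_all)
  then show ?thesis unfolding P_def using ellF_K[of k] by simp
qed

lemma ellF_shift:
  assumes "0 \<le> k" "k < 1"
  shows "ellF k (x + pi) = ellF k x + 2 * ellK k"
proof -
  define H where "H x = ellF k (x + pi) - ellF k x" for x
  have "\<forall>x. DERIV H x :> 0"
  proof
    fix x
    have "DERIV H x :> ell_integrand k (x + pi) * 1 - ell_integrand k x"
      unfolding H_def
      by (intro DERIV_diff ellF_chain[OF assms] ellF_deriv[OF assms]) (auto intro!: derivative_eq_intros)
    then show "DERIV H x :> 0" using ell_integrand_shift[of k x] by simp
  qed
  then have "H x = H 0" by (rule DERIV_isconst_all)
  then show ?thesis unfolding H_def using ellF_sym[OF assms, of 0] ellF_0[of k] by simp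
qed

lemma jam_shift:
  assumes "0 \<le> k" "k < 1"
  shows "jam (u + 2 * ellK k) k = jam u k + pi"
  by (rule jam_unique[OF assms]) (simp add: ellF_shift[OF assms] jam_eq[OF assms])

lemma jam_shift_neg:
  assumes "0 \<le> k" "k < 1"
  shows "jam (u - 2 * ellK k) k = jam u k - pi"
  using jam_shift[OF assms, of "u - 2 * ellK k"] by simp

lemma jam_K: "0 \<le> k \<Longrightarrow> k < 1 \<Longrightarrow> jam (ellK k) k = pi/2"
  by (rule jam_unique) (simp_all add: ellF_K)

lemma jam_mK:
  assumes "0 \<le> k" "k < 1"
  shows "jam (- ellK k) k = - pi/2"
proof (rule jam_unique[OF assms])
  show "ellF k (- pi / 2) = - ellK k"
    using ellF_shift[OF assms, of "-pi/2"] ellF_K[of k] by simp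
qed

lemma ellK_ge:
  assumes "0 \<le> k" "k < 1"
  shows "pi/2 \<le> ellK k \<and> ellK k \<le> (pi/2) / sqrt (1 - k\<^sup>2)"
  using ellF_diff[OF assms, of 0 "pi/2"] ellF_K[of k] ellF_0[of k] by simp



definition gd :: "real \<Rightarrow> real" where "gd t = arctan (sinh t)"

lemma sqrt_cosh: "sqrt (1 + (sinh t)\<^sup>2) = cosh t"
  by (metis add.commute cosh_real_nonneg cosh_square_eq real_sqrt_abs abs_of_nonneg)

lemma sin_gd: "sin (gd t) = tanh t"
  unfolding gd_def sin_arctan sqrt_cosh by (simp add: tanh_def)

lemma cos_gd: "cos (gd t) = 1 / cosh t"
  unfolding gd_def cos_arctan sqrt_cosh ..

lemma gd_0: "gd 0 = 0" unfolding gd_def by simp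

lemma gd_deriv: "DERIV gd t :> 1 / cosh t"
proof -
  have "DERIV gd t :> inverse (1 + (sinh t)\<^sup>2) * cosh t"
    unfolding gd_def by (intro DERIV_chain2[OF DERIV_arctan]) (auto intro!: derivative_eq_intros)
  also have "inverse (1 + (sinh t)\<^sup>2) * cosh t = 1 / cosh t"
  proof -
    have "1 + (sinh t)\<^sup>2 = (cosh t)\<^sup>2" using cosh_square_eq[of t] by simp
    then show ?thesis by (simp add: field_simps power2_eq_square)
  qed
  finally show ?thesis .
qed

lemma gd_lt: "gd t < pi/2" unfolding gd_def by (rule arctan_ubound)

lemma mvt_bound:
  fixes D D' :: "real \<Rightarrow> real"
  assumes "\<And>z. \<bar>z\<bar> \<le> \<bar>t\<bar> \<Longrightarrow> DERIV D z :> D' z"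
    and "\<And>z. \<bar>z\<bar> \<le> \<bar>t\<bar> \<Longrightarrow> \<bar>D' z\<bar> \<le> B"
  shows "\<bar>D t - D 0\<bar> \<le> B * \<bar>t\<bar>"
proof (cases t "0::real" rule: linorder_cases)
  case less
  from MVT2[OF less, of D D'] assms(1) obtain z where z: "t < z" "z < 0" "D 0 - D t = (0 - t) * D' z"
    by force
  have "\<bar>D' z\<bar> \<le> B" using assms(2)[of z] z by simp
  then show ?thesis using z less by (simp add: abs_mult abs_minus_commute mult.commute)
next
  case greater
  from MVT2[OF greater, of D D'] assms(1) obtain z where z: "0 < z" "z < t" "D t - D 0 = (t - 0) * D' z"
    by force
  have "\<bar>D' z\<bar> \<le> B" using assms(2)[of z] z by simp
  then show ?thesis using z greater by (simp add: abs_mult mult.commute)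
qed simp

lemma gd_lip: "\<bar>gd x - gd y\<bar> \<le> \<bar>x - y\<bar>"
proof -
  define D where "D z = gd (z + y)" for z
  have "\<bar>D (x - y) - D 0\<bar> \<le> 1 * \<bar>x - y\<bar>"
  proof (rule mvt_bound)
    fix z
    have "DERIV (\<lambda>z. z + y) z :> 1" by (auto intro!: derivative_eq_intros)
    from DERIV_chain2[OF gd_deriv this] show "DERIV D z :> 1 / cosh (z + y)"
      unfolding D_def by simp
    show "\<bar>1 / cosh (z + y)\<bar> \<le> 1" using cosh_real_ge_1[of "z+y"] by simp
  qed
  then show ?thesis unfolding D_def by simp
qed

lemma integrand_gd:
  assumes "0 \<le> k" "k < 1"
  shows "ell_integrand k (gd s) * (1 / cosh s) = 1 / sqrt (1 + (1 - k\<^sup>2) * (sinh s)\<^sup>2)"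
proof -
  have c: "cosh s > 0" by simp
  have C2: "(cosh s)\<^sup>2 = 1 + (sinh s)\<^sup>2" using cosh_square_eq[of s] by simp
  have "(cosh s)\<^sup>2 * (1 - k\<^sup>2 * (tanh s)\<^sup>2) = (cosh s)\<^sup>2 - k\<^sup>2 * (sinh s)\<^sup>2"
    using c by (simp add: tanh_def field_simps power2_eq_square)
  then have "1 + (1 - k\<^sup>2) * (sinh s)\<^sup>2 = (cosh s)\<^sup>2 * (1 - k\<^sup>2 * (tanh s)\<^sup>2)"
    using C2 by (simp add: algebra_simps)
  then have "sqrt (1 + (1 - k\<^sup>2) * (sinh s)\<^sup>2) = cosh s * sqrt (1 - k\<^sup>2 * (tanh s)\<^sup>2)"
    by (simp add: real_sqrt_mult)
  then show ?thesis unfolding ell_integrand_def sin_gd by simp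
qed

lemma one_minus_inv_sqrt:
  assumes "0 \<le> (x::real)"
  shows "0 \<le> 1 - 1 / sqrt (1 + x) \<and> 1 - 1 / sqrt (1 + x) \<le> x"
proof -
  have s1: "1 \<le> sqrt (1 + x)" using assms by simp
  have "1 + x \<le> (1 + x)\<^sup>2" using assms by (simp add: power2_eq_square)
  then have "sqrt (1 + x) \<le> sqrt ((1 + x)\<^sup>2)" by (rule real_sqrt_le_mono)
  then have s2: "sqrt (1 + x) \<le> 1 + x" using assms by simp
  have "1 / sqrt (1 + x) \<ge> 1 / (1 + x)" using s1 s2 by (intro divide_left_mono) auto
  moreover have "1 / (1 + x) \<ge> 1 - x"
  proof -
    have "(1 - x) * (1 + x) \<le> 1" by (simp add: algebra_simps)
    then show ?thesis using assms by (simp add: le_divide_eq)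
  qed
  moreover have "1 / sqrt (1 + x) \<le> 1" using s1 by simp
  ultimately show ?thesis by linarith
qed

lemma sinh_sq_le: "\<bar>s::real\<bar> \<le> T \<Longrightarrow> (sinh s)\<^sup>2 \<le> (sinh T)\<^sup>2"
proof -
  assume h: "\<bar>s\<bar> \<le> T"
  have "\<bar>sinh s\<bar> \<le> sinh T" using h sinh_real_abs[of s] sinh_real_le_iff by metis
  then show ?thesis by (metis abs_ge_zero order_trans power2_abs power_mono)
qed

lemma approx_main:
  assumes "0 \<le> k" "k < 1" "\<bar>t\<bar> \<le> T"
  shows "\<bar>ellF k (gd t) - t\<bar> \<le> ((1 - k\<^sup>2) * (sinh T)\<^sup>2) * T"
proof -
  define D where "D s = ellF k (gd s) - s" for s
  define D' where "D' s = 1 / sqrt (1 + (1 - k\<^sup>2) * (sinh s)\<^sup>2) - 1" for s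
  have k2: "0 \<le> 1 - k\<^sup>2" using assms power_strict_mono[of k 1 2] by simp
  have "\<bar>D t - D 0\<bar> \<le> ((1 - k\<^sup>2) * (sinh T)\<^sup>2) * \<bar>t\<bar>"
  proof (rule mvt_bound)
    fix z
    have "DERIV D z :> ell_integrand k (gd z) * (1 / cosh z) - 1"
      unfolding D_def by (intro DERIV_diff ellF_chain[OF assms(1,2)] gd_deriv) (auto intro!: derivative_eq_intros)
    then show "DERIV D z :> D' z" unfolding D'_def integrand_gd[OF assms(1,2)] .
  next
    fix z assume z: "\<bar>z\<bar> \<le> \<bar>t\<bar>"
    have x: "0 \<le> (1 - k\<^sup>2) * (sinh z)\<^sup>2" using k2 by simp
    have "\<bar>D' z\<bar> \<le> (1 - k\<^sup>2) * (sinh z)\<^sup>2"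
      using one_minus_inv_sqrt[OF x] unfolding D'_def by linarith
    also have "\<dots> \<le> (1 - k\<^sup>2) * (sinh T)\<^sup>2"
      using sinh_sq_le[of z T] z assms(3) k2 by (intro mult_left_mono) auto
    finally show "\<bar>D' z\<bar> \<le> (1 - k\<^sup>2) * (sinh T)\<^sup>2" .
  qed
  also have "\<dots> \<le> ((1 - k\<^sup>2) * (sinh T)\<^sup>2) * T"
    using assms(3) k2 by (intro mult_left_mono) auto
  finally show ?thesis unfolding D_def by (simp add: gd_0 ellF_0)
qed

lemma jam_approx:
  assumes "0 \<le> k" "k < 1" "\<bar>t\<bar> \<le> T"
  shows "\<bar>jam t k - gd t\<bar> \<le> ((1 - k\<^sup>2) * (sinh T)\<^sup>2) * T"
  using jam_lip[OF assms(1,2), of t "gd t"] approx_main[OF assms] by linarith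



lemma compl_algebra:
  assumes k: "0 \<le> k" "k < 1" and c: "cos x > 0"
  defines "kp \<equiv> sqrt (1 - k\<^sup>2)"
  defines "X \<equiv> kp * tan x"
  shows "ell_integrand k x + ell_integrand k (pi/2 - arctan X) * (- (inverse (1 + X\<^sup>2) * (kp * inverse ((cos x)\<^sup>2)))) = 0"
proof -
  have k2: "0 < 1 - k\<^sup>2" using k power_strict_mono[of k 1 2] by simp
  have kp: "kp > 0" "kp\<^sup>2 = 1 - k\<^sup>2" unfolding kp_def using k2 by auto
  define Q where "Q = sqrt (1 + X\<^sup>2)"
  have Q: "Q > 0" "Q\<^sup>2 = 1 + X\<^sup>2" unfolding Q_def by (auto simp: add_pos_nonneg)
  have sc: "(sin x)\<^sup>2 + (cos x)\<^sup>2 = 1" by simp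
  have A: "1 - k\<^sup>2 * (sin x)\<^sup>2 = (cos x * Q)\<^sup>2"
  proof -
    have "(cos x * Q)\<^sup>2 = (cos x)\<^sup>2 + kp\<^sup>2 * (sin x)\<^sup>2"
      unfolding power_mult_distrib Q(2) X_def tan_def using c
      by (simp add: field_simps power2_eq_square)
    then show ?thesis using kp(2) sc by (simp add: algebra_simps)
  qed
  have sinchi: "sin (pi/2 - arctan X) = 1 / Q" unfolding Q_def by (simp add: sin_diff cos_arctan)
  have B: "1 - k\<^sup>2 * (sin (pi/2 - arctan X))\<^sup>2 = (kp / (cos x * Q))\<^sup>2"
  proof -
    have "1 - k\<^sup>2 * (sin (pi/2 - arctan X))\<^sup>2 = (Q\<^sup>2 - k\<^sup>2) / Q\<^sup>2"
      unfolding sinchi using Q by (simp add: power_divide diff_divide_distrib) (metis Q(1) Q(2) less_irrefl zero_less_power)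
    also have "Q\<^sup>2 - k\<^sup>2 = kp\<^sup>2 + X\<^sup>2" using Q(2) kp(2) by simp
    also have "kp\<^sup>2 + X\<^sup>2 = kp\<^sup>2 / (cos x)\<^sup>2"
    proof -
      have "X\<^sup>2 = kp\<^sup>2 * (sin x)\<^sup>2 / (cos x)\<^sup>2" unfolding X_def tan_def by (simp add: power_mult_distrib power_divide)
      then have "kp\<^sup>2 + X\<^sup>2 = kp\<^sup>2 * ((cos x)\<^sup>2 + (sin x)\<^sup>2) / (cos x)\<^sup>2" using c by (simp add: field_simps flip: distrib_left)
      then show ?thesis using sc by (simp add: add.commute)
    qed
    finally show ?thesis by (simp add: power_mult_distrib power_divide)
  qed
  have f1: "ell_integrand k x = 1 / (cos x * Q)"
    unfolding ell_integrand_def A using c Q by simp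
  have f2: "ell_integrand k (pi/2 - arctan X) = cos x * Q / kp"
    unfolding ell_integrand_def B using c Q kp by simp
  have "(cos x * Q / kp) * (inverse (Q\<^sup>2) * (kp * inverse ((cos x)\<^sup>2))) = 1 / (cos x * Q)"
    using c Q(1) kp(1) by (simp add: field_simps power2_eq_square)
  then show ?thesis unfolding f1 f2 Q(2)[symmetric] by simp
qed

lemma ellF_compl:
  assumes k: "0 \<le> k" "k < 1" and phi: "-pi/2 < \<phi>" "\<phi> < pi/2"
  shows "ellF k \<phi> + ellF k (pi/2 - arctan (sqrt (1 - k\<^sup>2) * tan \<phi>)) = ellK k"
proof -
  define kp where "kp = sqrt (1 - k\<^sup>2)"
  define G where "G x = ellF k x + ellF k (pi/2 - arctan (kp * tan x))" for x
  have "G \<phi> = G 0"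
  proof (rule DERIV_isconst3[where a="-pi/2" and b="pi/2" and x=\<phi> and y=0 and f=G])
    fix x :: real assume x: "x \<in> {-pi/2<..<pi/2}"
    then have c: "cos x > 0" by (auto intro: cos_gt_zero_pi)
    have d1: "DERIV (\<lambda>x. kp * tan x) x :> kp * inverse ((cos x)\<^sup>2)"
      using DERIV_cmult[OF DERIV_tan[of x], of kp] c by simp
    have d2: "DERIV (\<lambda>x. pi/2 - arctan (kp * tan x)) x :> 0 - inverse (1 + (kp * tan x)\<^sup>2) * (kp * inverse ((cos x)\<^sup>2))"
      by (intro DERIV_diff DERIV_const DERIV_chain2[OF DERIV_arctan d1])
    have "DERIV G x :> ell_integrand k x + ell_integrand k (pi/2 - arctan (kp * tan x)) * (0 - inverse (1 + (kp * tan x)\<^sup>2) * (kp * inverse ((cos x)\<^sup>2)))"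
      unfolding G_def by (intro DERIV_add ellF_deriv[OF k] ellF_chain[OF k d2])
    then show "DERIV G x :> 0" using compl_algebra[OF k c] unfolding kp_def by simp
  qed (use phi in auto)
  then show ?thesis unfolding G_def kp_def using ellF_0[of k] ellF_K[of k] by simp
qed



lemma sin_lip: "\<bar>sin x - sin y\<bar> \<le> \<bar>x - (y::real)\<bar>"
proof -
  define D where "D z = sin (z + y)" for z
  have "\<bar>D (x - y) - D 0\<bar> \<le> 1 * \<bar>x - y\<bar>"
  proof (rule mvt_bound)
    fix z
    have "DERIV (\<lambda>z. z + y) z :> 1" by (auto intro!: derivative_eq_intros)
    from DERIV_chain2[OF DERIV_sin this] show "DERIV D z :> cos (z + y)"
      unfolding D_def by simp
    show "\<bar>cos (z + y)\<bar> \<le> 1" by simp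
  qed
  then show ?thesis unfolding D_def by simp
qed

lemma cos_lip: "\<bar>cos x - cos y\<bar> \<le> \<bar>x - (y::real)\<bar>"
proof -
  define D where "D z = cos (z + y)" for z
  have "\<bar>D (x - y) - D 0\<bar> \<le> 1 * \<bar>x - y\<bar>"
  proof (rule mvt_bound)
    fix z
    have "DERIV (\<lambda>z. z + y) z :> 1" by (auto intro!: derivative_eq_intros)
    from DERIV_chain2[OF DERIV_cos this] show "DERIV D z :> - sin (z + y)"
      unfolding D_def by simp
    show "\<bar>- sin (z + y)\<bar> \<le> 1" by simp
  qed
  then show ?thesis unfolding D_def by simp
qed

lemma Q_lip:
  fixes a b :: real
  assumes "0 \<le> a" "0 \<le> b"
  shows "dist (a * sin x, b * cos x) (a * sin y, b * cos y) \<le> (a + b) * \<bar>x - y\<bar>"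
proof -
  have "dist (a * sin x, b * cos x) (a * sin y, b * cos y)
      = sqrt ((a * sin x - a * sin y)\<^sup>2 + (b * cos x - b * cos y)\<^sup>2)"
    by (simp add: dist_Pair_Pair dist_real_def)
  also have "\<dots> \<le> \<bar>a * sin x - a * sin y\<bar> + \<bar>b * cos x - b * cos y\<bar>"
    by (rule sqrt_sum_squares_le_sum_abs)
  also have "\<bar>a * sin x - a * sin y\<bar> = a * \<bar>sin x - sin y\<bar>"
    using assms by (simp add: abs_mult flip: right_diff_distrib)
  also have "\<bar>b * cos x - b * cos y\<bar> = b * \<bar>cos x - cos y\<bar>"
    using assms by (simp add: abs_mult flip: right_diff_distrib)
  also have "a * \<bar>sin x - sin y\<bar> + b * \<bar>cos x - cos y\<bar> \<le> a * \<bar>x - y\<bar> + b * \<bar>x - y\<bar>"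
    using assms sin_lip[of x y] cos_lip[of x y] by (intro add_mono mult_left_mono) auto
  finally show ?thesis by (simp add: algebra_simps)
qed

lemma dist_fst_ge: "\<bar>x1 - x2\<bar> \<le> dist (x1::real, y1::real) (x2, y2)"
  unfolding dist_Pair_Pair dist_real_def
  using real_sqrt_sum_squares_ge1[of "\<bar>x1 - x2\<bar>" "\<bar>y1 - y2\<bar>"] by simp

lemma qh_gd: "(a * tanh s, b / cosh s) = (a * sin (gd s), b * cos (gd s))"
  by (simp add: sin_gd cos_gd)



theorem lemma3:
  fixes a b c h :: real
    and k K K' \<delta> \<zeta> :: "real \<Rightarrow> real"
    and qt :: "real \<Rightarrow> real \<Rightarrow> real \<times> real"
    and qh :: "real \<Rightarrow> real \<times> real"
  assumes ab: "0 < b" "b < a"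
    and c_def: "c = sqrt (a\<^sup>2 - b\<^sup>2)"
    and h_pos: "h > 0" and h_def: "sinh (h/2) = c / b"
    and k_def: "\<And>l. k l = sqrt ((a\<^sup>2 - b\<^sup>2) / (a\<^sup>2 - l\<^sup>2))"
    and K_def: "\<And>l. K l = ellK (k l)"
    and K'_def: "\<And>l. K' l = ellK (sqrt (1 - (k l)\<^sup>2))"
    and \<delta>_prop: "\<And>l. 0 < l \<Longrightarrow> l < b \<Longrightarrow>
                   0 < \<delta> l \<and> \<delta> l < 2 * K l \<and> jsn (\<delta> l / 2) (k l) = l / b"
    and \<zeta>_def: "\<And>l. \<zeta> l = 2 * K l - \<delta> l"
    and qt_def: "\<And>l t. qt l t = (a * jsn t (k l), b * jcn t (k l))"
    and qh_def: "\<And>s. qh s = (a * tanh s, b / cosh s)"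
  shows "((k \<longlongrightarrow> 1) (at_left b))
    \<and> (filterlim K at_top (at_left b))
    \<and> ((K' \<longlongrightarrow> pi / 2) (at_left b))
    \<and> ((\<zeta> \<longlongrightarrow> h) (at_left b))
    \<and> (\<forall>C. compact C \<longrightarrow> uniform_limit C qt qh (at_left b))
    \<and> (\<forall>C. compact C \<longrightarrow>
           uniform_limit C (\<lambda>l t. qt l (t + \<delta> l)) (\<lambda>t. - qh (t - h)) (at_left b))
    \<and> (\<forall>C. compact C \<longrightarrow>
           uniform_limit C (\<lambda>l t. qt l (t - \<delta> l)) (\<lambda>t. - qh (t + h)) (at_left b))
    \<and> (\<not> uniform_limit UNIV qt qh (at_left b))
    \<and> (\<not> uniform_limit UNIV (\<lambda>l t. qt l (t + \<delta> l)) (\<lambda>t. - qh (t - h)) (at_left b))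
    \<and> (\<not> uniform_limit UNIV (\<lambda>l t. qt l (t - \<delta> l)) (\<lambda>t. - qh (t + h)) (at_left b))"
proof -
  have a2b2: "a\<^sup>2 - b\<^sup>2 > 0" using ab by (simp add: power_strict_mono)
  have kprop: "0 < k l \<and> k l < 1 \<and> (k l)\<^sup>2 = (a\<^sup>2 - b\<^sup>2) / (a\<^sup>2 - l\<^sup>2)" if l: "0 < l" "l < b" for l
  proof -
    have "l\<^sup>2 < b\<^sup>2" using l by (simp add: power_strict_mono)
    then have d: "a\<^sup>2 - b\<^sup>2 < a\<^sup>2 - l\<^sup>2" by simp
    define r where "r = (a\<^sup>2 - b\<^sup>2) / (a\<^sup>2 - l\<^sup>2)"
    have r: "0 < r" "r < 1" unfolding r_def using a2b2 d by (auto simp: divide_less_eq)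
    show ?thesis unfolding k_def r_def[symmetric] using r by (auto simp: real_sqrt_less_iff)
  qed
  have kk: "0 \<le> k l" "k l < 1" if "0 < l" "l < b" for l
    using kprop[OF that] by auto
  have ev0: "eventually (\<lambda>l. 0 < l \<and> l < b) (at_left b)"
    using eventually_at_left_real[OF ab(1)] by (simp add: eventually_mono)
  have kfun: "k = (\<lambda>l. sqrt ((a\<^sup>2 - b\<^sup>2) / (a\<^sup>2 - l\<^sup>2)))" using k_def by auto
  have klim: "(k \<longlongrightarrow> 1) (at_left b)"
  proof -
    have "((\<lambda>l. sqrt ((a\<^sup>2 - b\<^sup>2) / (a\<^sup>2 - l\<^sup>2))) \<longlongrightarrow> sqrt ((a\<^sup>2 - b\<^sup>2) / (a\<^sup>2 - b\<^sup>2))) (at_left b)"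
      using a2b2 by (intro tendsto_intros) auto
    then show ?thesis unfolding kfun using a2b2 by simp
  qed
  have Blim: "((\<lambda>l. ((1 - (k l)\<^sup>2) * (sinh T)\<^sup>2) * T) \<longlongrightarrow> 0) (at_left b)" for T
  proof -
    have "((\<lambda>l. ((1 - (k l)\<^sup>2) * (sinh T)\<^sup>2) * T) \<longlongrightarrow> ((1 - 1\<^sup>2) * (sinh T)\<^sup>2) * T) (at_left b)"
      by (intro tendsto_intros klim)
    then show ?thesis by simp
  qed
  have Bev: "eventually (\<lambda>l. ((1 - (k l)\<^sup>2) * (sinh T)\<^sup>2) * T < e) (at_left b)" if "e > 0" for T e
    using order_tendstoD(2)[OF Blim that] .
  have Kfact: "K l = ellF (k l) (pi/2)" for l using K_def ellF_K by simp
  have item2: "filterlim K at_top (at_left b)"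
    unfolding filterlim_at_top
  proof
    fix Z :: real
    define T where "T = \<bar>Z\<bar> + 1"
    have T0: "0 \<le> T" unfolding T_def by simp
    show "eventually (\<lambda>l. Z \<le> K l) (at_left b)"
      using eventually_conj[OF ev0 Bev[OF zero_less_one, of T]]
    proof (rule eventually_mono)
      fix l assume l: "(0 < l \<and> l < b) \<and> ((1 - (k l)\<^sup>2) * (sinh T)\<^sup>2) * T < 1"
      have k1: "0 \<le> k l" "k l < 1" using kk l by auto
      have "\<bar>ellF (k l) (gd T) - T\<bar> \<le> ((1 - (k l)\<^sup>2) * (sinh T)\<^sup>2) * T"
        by (rule approx_main[OF k1]) (use T0 in simp)
      moreover have "ellF (k l) (gd T) \<le> ellF (k l) (pi/2)"
        using ellF_le_iff[OF k1] gd_lt[of T] by simp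
      ultimately show "Z \<le> K l" using l Kfact[of l] unfolding T_def by linarith
    qed
  qed
  have item3: "(K' \<longlongrightarrow> pi / 2) (at_left b)"
  proof (rule tendsto_sandwich[where f="\<lambda>l. pi/2" and h="\<lambda>l. (pi/2) / k l"])
    have bnd: "pi/2 \<le> K' l \<and> K' l \<le> (pi/2) / k l" if l: "0 < l \<and> l < b" for l
    proof -
      define kp where "kp = sqrt (1 - (k l)\<^sup>2)"
      have kl: "0 < k l" "k l < 1" using kprop l by auto
      have k2: "0 < 1 - (k l)\<^sup>2" "1 - (k l)\<^sup>2 < 1" using kl power_strict_mono[of "k l" 1 2] by auto
      have kp: "0 \<le> kp" "kp < 1" unfolding kp_def using k2 by (auto simp: real_sqrt_less_iff)
      have kp2: "1 - kp\<^sup>2 = (k l)\<^sup>2" unfolding kp_def using k2 by simp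
      have "sqrt (1 - kp\<^sup>2) = k l" unfolding kp2 using kl by simp
      then show ?thesis using ellK_ge[OF kp] K'_def[of l] unfolding kp_def by simp
    qed
    show "eventually (\<lambda>l. pi/2 \<le> K' l) (at_left b)"
      using ev0 by (rule eventually_mono) (use bnd in blast)
    show "eventually (\<lambda>l. K' l \<le> (pi/2) / k l) (at_left b)"
      using ev0 by (rule eventually_mono) (use bnd in blast)
    show "((\<lambda>l. pi / 2) \<longlongrightarrow> pi / 2) (at_left b)" by simp
    have "((\<lambda>l. (pi/2) / k l) \<longlongrightarrow> (pi/2) / 1) (at_left b)"
      by (intro tendsto_intros klim) simp
    then show "((\<lambda>l. (pi/2) / k l) \<longlongrightarrow> pi / 2) (at_left b)" by simp
  qed
  define \<tau> where "\<tau> l = arsinh (sqrt (a\<^sup>2 - l\<^sup>2) / l)" for l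
  have zeta_eq: "\<zeta> l / 2 = ellF (k l) (gd (\<tau> l))" if l: "0 < l \<and> l < b" for l
  proof -
    have kl: "0 < k l" "k l < 1" "(k l)\<^sup>2 = (a\<^sup>2 - b\<^sup>2) / (a\<^sup>2 - l\<^sup>2)" using kprop l by auto
    have k1: "0 \<le> k l" "k l < 1" using kl by auto
    from \<delta>_prop[of l] l have dp: "0 < \<delta> l" "\<delta> l < 2 * K l" "jsn (\<delta> l / 2) (k l) = l / b" by auto
    define j where "j = jam (\<delta> l / 2) (k l)"
    have Fj: "ellF (k l) j = \<delta> l / 2" unfolding j_def by (rule jam_eq[OF k1])
    have j0: "0 < j" using ellF_less_iff[OF k1, of 0 j] Fj dp ellF_0[of "k l"] by simp
    have j1: "j < pi/2" using ellF_less_iff[OF k1, of j "pi/2"] Fj dp Kfact[of l] by simp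
    have sj: "sin j = l / b" using dp(3) unfolding jsn_def j_def .
    define \<phi> where "\<phi> = arcsin (l / b)"
    have j\<phi>: "j = \<phi>" unfolding \<phi>_def sj[symmetric] using j0 j1 by (simp add: arcsin_sin)
    have lb: "0 < l/b" "l/b < 1" using l ab by auto
    have c\<phi>: "cos \<phi> = sqrt (1 - (l/b)\<^sup>2)" unfolding \<phi>_def by (rule cos_arcsin) (use lb in auto)
    have s\<phi>: "sin \<phi> = l/b" unfolding \<phi>_def using lb by simp
    have compl: "ellF (k l) \<phi> + ellF (k l) (pi/2 - arctan (sqrt (1 - (k l)\<^sup>2) * tan \<phi>)) = ellK (k l)"
      by (rule ellF_compl[OF k1]) (use j0 j1 j\<phi> in auto)
    have lt: "l\<^sup>2 < b\<^sup>2" "b\<^sup>2 < a\<^sup>2" using l ab by (auto simp: power_strict_mono)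
    have wl: "sqrt (1 - (k l)\<^sup>2) * tan \<phi> = l / sqrt (a\<^sup>2 - l\<^sup>2)"
    proof -
      have e1: "1 - (k l)\<^sup>2 = (b\<^sup>2 - l\<^sup>2)/(a\<^sup>2 - l\<^sup>2)" using kl(3) lt by (simp add: field_simps)
      have e2: "1 - (l/b)\<^sup>2 = (b\<^sup>2 - l\<^sup>2)/b\<^sup>2" using ab by (simp add: field_simps)
      have p1: "sqrt (b\<^sup>2 - l\<^sup>2) > 0" "sqrt (a\<^sup>2 - l\<^sup>2) > 0" using lt by auto
      show ?thesis unfolding tan_def s\<phi> c\<phi> e1 e2 using p1 ab l by (simp add: real_sqrt_divide field_simps)
    qed
    have wpos: "l / sqrt (a\<^sup>2 - l\<^sup>2) > 0" using l lt by auto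
    have arc: "pi/2 - arctan (l / sqrt (a\<^sup>2 - l\<^sup>2)) = gd (\<tau> l)"
      unfolding gd_def \<tau>_def sinh_arsinh_real using arctan_inverse[of "l / sqrt (a\<^sup>2 - l\<^sup>2)"] wpos by simp
    show ?thesis using compl wl arc Fj j\<phi> \<zeta>_def[of l] K_def[of l] by simp
  qed
  have \<tau>lim: "(\<tau> \<longlongrightarrow> h/2) (at_left b)"
  proof -
    have "((\<lambda>l. arsinh (sqrt (a\<^sup>2 - l\<^sup>2) / l)) \<longlongrightarrow> arsinh (sqrt (a\<^sup>2 - b\<^sup>2) / b)) (at_left b)"
      using ab by (intro tendsto_intros) auto
    moreover have "arsinh (sqrt (a\<^sup>2 - b\<^sup>2) / b) = h/2"
      using h_def c_def arsinh_sinh_real[of "h/2"] by simp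
    ultimately show ?thesis unfolding \<tau>_def[abs_def] by simp
  qed
  have item4: "(\<zeta> \<longlongrightarrow> h) (at_left b)"
  proof -
    define T where "T = \<bar>h/2\<bar> + 1"
    have ev1: "eventually (\<lambda>l. dist (\<tau> l) (h/2) < 1) (at_left b)"
      by (rule tendstoD[OF \<tau>lim zero_less_one])
    have "((\<lambda>l. \<zeta> l / 2 - \<tau> l) \<longlongrightarrow> 0) (at_left b)"
    proof (rule Lim_null_comparison[OF _ Blim[of T]])
      show "eventually (\<lambda>l. norm (\<zeta> l / 2 - \<tau> l) \<le> ((1 - (k l)\<^sup>2) * (sinh T)\<^sup>2) * T) (at_left b)"
        using eventually_conj[OF ev0 ev1]
      proof (rule eventually_mono)
        fix l assume l: "(0 < l \<and> l < b) \<and> dist (\<tau> l) (h/2) < 1"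
        have k1: "0 \<le> k l" "k l < 1" using kk l by auto
        have "\<bar>\<tau> l\<bar> \<le> T" using l unfolding T_def dist_real_def by linarith
        from approx_main[OF k1 this] zeta_eq[of l] l
        show "norm (\<zeta> l / 2 - \<tau> l) \<le> ((1 - (k l)\<^sup>2) * (sinh T)\<^sup>2) * T" by simp
      qed
    qed
    then have "((\<lambda>l. 2 * (\<zeta> l / 2 - \<tau> l) + 2 * \<tau> l) \<longlongrightarrow> 2 * 0 + 2 * (h/2)) (at_left b)"
      by (intro tendsto_intros \<tau>lim)
    then show ?thesis by simp
  qed
  have U: "\<forall>e>0. eventually (\<lambda>l. \<forall>t\<in>C. dist (qt l (t + s l)) (qh (t + s0)) < e) (at_left b)"
    if C: "compact C" and s: "(s \<longlongrightarrow> s0) (at_left b)" for C and s :: "real \<Rightarrow> real" and s0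
  proof (intro allI impI)
    fix e :: real assume e: "e > 0"
    obtain R where R: "R > 0" "\<forall>t\<in>C. norm t \<le> R"
      using compact_imp_bounded[OF C] unfolding bounded_pos by auto
    define T where "T = R + \<bar>s0\<bar> + 1"
    define \<eta> where "\<eta> = e / (2 * (a + b))"
    have ab0: "a + b > 0" using ab by simp
    have \<eta>: "\<eta> > 0" unfolding \<eta>_def using e ab0 by simp
    have ev1: "eventually (\<lambda>l. dist (s l) s0 < min 1 \<eta>) (at_left b)"
      by (rule tendstoD[OF s]) (use \<eta> in simp)
    show "eventually (\<lambda>l. \<forall>t\<in>C. dist (qt l (t + s l)) (qh (t + s0)) < e) (at_left b)"
      using eventually_conj[OF ev0 eventually_conj[OF ev1 Bev[OF \<eta>, of T]]]
    proof (rule eventually_mono)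
      fix l assume l: "(0 < l \<and> l < b) \<and> dist (s l) s0 < min 1 \<eta> \<and> ((1 - (k l)\<^sup>2) * (sinh T)\<^sup>2) * T < \<eta>"
      have k1: "0 \<le> k l" "k l < 1" using kk l by auto
      show "\<forall>t\<in>C. dist (qt l (t + s l)) (qh (t + s0)) < e"
      proof
        fix t assume t: "t \<in> C"
        have tR: "\<bar>t\<bar> \<le> R" using R(2) t by simp
        have sd: "\<bar>s l - s0\<bar> < 1" "\<bar>s l - s0\<bar> < \<eta>" using l unfolding dist_real_def by auto
        have tT: "\<bar>t + s l\<bar> \<le> T" unfolding T_def using tR sd by linarith
        have j: "\<bar>jam (t + s l) (k l) - gd (t + s l)\<bar> \<le> ((1 - (k l)\<^sup>2) * (sinh T)\<^sup>2) * T"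
          by (rule jam_approx[OF k1 tT])
        have g: "\<bar>gd (t + s l) - gd (t + s0)\<bar> \<le> \<bar>s l - s0\<bar>" using gd_lip[of "t + s l" "t + s0"] by simp
        have "dist (qt l (t + s l)) (qh (t + s0)) \<le> (a + b) * \<bar>jam (t + s l) (k l) - gd (t + s0)\<bar>"
          unfolding qt_def qh_def qh_gd jsn_def jcn_def by (rule Q_lip) (use ab in auto)
        also have "\<dots> < (a + b) * (2 * \<eta>)"
          using j g sd l ab0 by (intro mult_strict_left_mono) auto
        also have "\<dots> = e" unfolding \<eta>_def using ab0 by (simp add: field_simps)
        finally show "dist (qt l (t + s l)) (qh (t + s0)) < e" .
      qed
    qed
  qed
  have item5: "\<forall>C. compact C \<longrightarrow> uniform_limit C qt qh (at_left b)"
  proof (intro allI impI)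
    fix C :: "real set" assume C: "compact C"
    from U[OF C tendsto_const[of 0]] show "uniform_limit C qt qh (at_left b)"
      unfolding uniform_limit_iff by simp
  qed
  have sh6: "qt l (t + \<delta> l) = - qt l (t + - \<zeta> l)" if l: "0 < l \<and> l < b" for l t
  proof -
    have k1: "0 \<le> k l" "k l < 1" using kk l by auto
    have eq: "t + \<delta> l = (t + - \<zeta> l) + 2 * ellK (k l)" using \<zeta>_def[of l] K_def[of l] by simp
    have "jam (t + \<delta> l) (k l) = jam (t + - \<zeta> l) (k l) + pi" unfolding eq by (rule jam_shift[OF k1])
    then show ?thesis unfolding qt_def jsn_def jcn_def by simp
  qed
  have sh7: "qt l (t - \<delta> l) = - qt l (t + \<zeta> l)" if l: "0 < l \<and> l < b" for l t
  proof -
    have k1: "0 \<le> k l" "k l < 1" using kk l by auto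
    have eq: "t - \<delta> l = (t + \<zeta> l) - 2 * ellK (k l)" using \<zeta>_def[of l] K_def[of l] by simp
    have "jam (t - \<delta> l) (k l) = jam (t + \<zeta> l) (k l) - pi" unfolding eq by (rule jam_shift_neg[OF k1])
    then show ?thesis unfolding qt_def jsn_def jcn_def by simp
  qed
  have item6: "\<forall>C. compact C \<longrightarrow> uniform_limit C (\<lambda>l t. qt l (t + \<delta> l)) (\<lambda>t. - qh (t - h)) (at_left b)"
  proof (intro allI impI)
    fix C :: "real set" assume C: "compact C"
    have lim: "((\<lambda>l. - \<zeta> l) \<longlongrightarrow> - h) (at_left b)" by (intro tendsto_intros item4)
    show "uniform_limit C (\<lambda>l t. qt l (t + \<delta> l)) (\<lambda>t. - qh (t - h)) (at_left b)"
      unfolding uniform_limit_iff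
    proof (intro allI impI)
      fix e :: real assume e: "e > 0"
      from U[OF C lim, rule_format, OF e]
      have ev: "eventually (\<lambda>l. \<forall>t\<in>C. dist (qt l (t + - \<zeta> l)) (qh (t + - h)) < e) (at_left b)" .
      show "eventually (\<lambda>l. \<forall>t\<in>C. dist (qt l (t + \<delta> l)) (- qh (t - h)) < e) (at_left b)"
        using eventually_conj[OF ev0 ev]
      proof (rule eventually_mono)
        fix l assume l: "(0 < l \<and> l < b) \<and> (\<forall>t\<in>C. dist (qt l (t + - \<zeta> l)) (qh (t + - h)) < e)"
        show "\<forall>t\<in>C. dist (qt l (t + \<delta> l)) (- qh (t - h)) < e"
          using l sh6[of l] by (simp add: dist_minus)
      qed
    qed
  qed
  have item7: "\<forall>C. compact C \<longrightarrow> uniform_limit C (\<lambda>l t. qt l (t - \<delta> l)) (\<lambda>t. - qh (t + h)) (at_left b)"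
  proof (intro allI impI)
    fix C :: "real set" assume C: "compact C"
    show "uniform_limit C (\<lambda>l t. qt l (t - \<delta> l)) (\<lambda>t. - qh (t + h)) (at_left b)"
      unfolding uniform_limit_iff
    proof (intro allI impI)
      fix e :: real assume e: "e > 0"
      from U[OF C item4, rule_format, OF e]
      have ev: "eventually (\<lambda>l. \<forall>t\<in>C. dist (qt l (t + \<zeta> l)) (qh (t + h)) < e) (at_left b)" .
      show "eventually (\<lambda>l. \<forall>t\<in>C. dist (qt l (t - \<delta> l)) (- qh (t + h)) < e) (at_left b)"
        using eventually_conj[OF ev0 ev]
      proof (rule eventually_mono)
        fix l assume l: "(0 < l \<and> l < b) \<and> (\<forall>t\<in>C. dist (qt l (t + \<zeta> l)) (qh (t + h)) < e)"
        show "\<forall>t\<in>C. dist (qt l (t - \<delta> l)) (- qh (t + h)) < e"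
          using l sh7[of l] by (simp add: dist_minus)
      qed
    qed
  qed
  have noU: "\<not> uniform_limit UNIV F G (at_left b)"
    if bad: "\<And>l. 0 < l \<and> l < b \<Longrightarrow> \<exists>t. a \<le> dist (F l t) (G t)"
    for F :: "real \<Rightarrow> real \<Rightarrow> real \<times> real" and G
  proof
    assume "uniform_limit UNIV F G (at_left b)"
    then have "eventually (\<lambda>l. \<forall>t\<in>UNIV. dist (F l t) (G t) < a) (at_left b)"
      using ab unfolding uniform_limit_iff by auto
    then have "eventually (\<lambda>l. (0 < l \<and> l < b) \<and> (\<forall>t\<in>UNIV. dist (F l t) (G t) < a)) (at_left b)"
      using ev0 by (rule eventually_conj[rotated])
    then obtain l where l: "0 < l \<and> l < b" "\<forall>t. dist (F l t) (G t) < a"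
      using eventually_happens'[OF trivial_limit_at_left_real] by blast
    from bad[OF l(1)] l(2) show False by (meson not_le)
  qed
  have a0: "a > 0" using ab by simp
  have Kpos: "0 \<le> K l" if "0 < l \<and> l < b" for l
  proof -
    have k1: "0 \<le> k l" "k l < 1" using kk that by auto
    show ?thesis using ellK_ge[OF k1] K_def[of l] pi_gt_zero by linarith
  qed
  have item8: "\<not> uniform_limit UNIV qt qh (at_left b)"
  proof (rule noU)
    fix l assume l: "0 < l \<and> l < b"
    have k1: "0 \<le> k l" "k l < 1" using kk l by auto
    define t where "t = K l + 2 * K l"
    have j: "jam t (k l) = pi/2 + pi" unfolding t_def K_def jam_shift[OF k1] jam_K[OF k1] ..
    have "sin (jam t (k l)) = -1" unfolding j by (simp only: sin_periodic_pi sin_pi_half)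
    then have q: "qt l t = (- a, b * jcn t (k l))" unfolding qt_def jsn_def by simp
    have th: "0 \<le> tanh t" unfolding t_def using Kpos[OF l] by simp
    have p: "0 \<le> a * tanh t" by (rule mult_nonneg_nonneg) (use th a0 in auto)
    have "a \<le> \<bar>- a - a * tanh t\<bar>" using p by (smt (verit))
    also have "\<dots> \<le> dist (qt l t) (qh t)" unfolding q qh_def by (rule dist_fst_ge)
    finally show "\<exists>t. a \<le> dist (qt l t) (qh t)" by blast
  qed
  have item9: "\<not> uniform_limit UNIV (\<lambda>l t. qt l (t + \<delta> l)) (\<lambda>t. - qh (t - h)) (at_left b)"
  proof (rule noU)
    fix l assume l: "0 < l \<and> l < b"
    have k1: "0 \<le> k l" "k l < 1" using kk l by auto
    define t where "t = - K l - \<delta> l"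
    have j: "jam (t + \<delta> l) (k l) = - pi/2" unfolding t_def K_def using jam_mK[OF k1] by simp
    have "sin (jam (t + \<delta> l) (k l)) = -1" unfolding j by simp
    then have q: "qt l (t + \<delta> l) = (- a, b * jcn (t + \<delta> l) (k l))" unfolding qt_def jsn_def by simp
    have th: "0 \<le> tanh (K l + \<delta> l + h)" using Kpos[OF l] \<delta>_prop[of l] l h_pos by simp
    have e: "- qh (t - h) = (a * tanh (K l + \<delta> l + h), - (b / cosh (t - h)))"
    proof -
      have "t - h = - (K l + \<delta> l + h)" unfolding t_def by simp
      then have "tanh (t - h) = - tanh (K l + \<delta> l + h)" by (simp only: tanh_minus)
      then show ?thesis unfolding qh_def by simp
    qed
    have p: "0 \<le> a * tanh (K l + \<delta> l + h)" by (rule mult_nonneg_nonneg) (use th a0 in auto)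
    have "a \<le> \<bar>- a - a * tanh (K l + \<delta> l + h)\<bar>" using p by (smt (verit))
    also have "\<dots> \<le> dist (qt l (t + \<delta> l)) (- qh (t - h))" unfolding q e by (rule dist_fst_ge)
    finally show "\<exists>t. a \<le> dist (qt l (t + \<delta> l)) (- qh (t - h))" by blast
  qed
  have item10: "\<not> uniform_limit UNIV (\<lambda>l t. qt l (t - \<delta> l)) (\<lambda>t. - qh (t + h)) (at_left b)"
  proof (rule noU)
    fix l assume l: "0 < l \<and> l < b"
    have k1: "0 \<le> k l" "k l < 1" using kk l by auto
    define t where "t = K l + \<delta> l"
    have j: "jam (t - \<delta> l) (k l) = pi/2" unfolding t_def K_def using jam_K[OF k1] by simp
    have "sin (jam (t - \<delta> l) (k l)) = 1" unfolding j by simp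
    then have q: "qt l (t - \<delta> l) = (a, b * jcn (t - \<delta> l) (k l))" unfolding qt_def jsn_def by simp
    have th: "0 \<le> tanh (K l + \<delta> l + h)" using Kpos[OF l] \<delta>_prop[of l] l h_pos by simp
    have e: "- qh (t + h) = (- (a * tanh (K l + \<delta> l + h)), - (b / cosh (t + h)))"
      unfolding qh_def t_def by simp
    have p: "0 \<le> a * tanh (K l + \<delta> l + h)" by (rule mult_nonneg_nonneg) (use th a0 in auto)
    have "a \<le> \<bar>a - - (a * tanh (K l + \<delta> l + h))\<bar>" using p by (smt (verit))
    also have "\<dots> \<le> dist (qt l (t - \<delta> l)) (- qh (t + h))" unfolding q e by (rule dist_fst_ge)
    finally show "\<exists>t. a \<le> dist (qt l (t - \<delta> l)) (- qh (t + h))" by blast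
  qed
  show ?thesis using klim item2 item3 item4 item5 item6 item7 item8 item9 item10 by blast
qed

end
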